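(* Let $\varphi$ and $\omega$ be Schwarz-type functions with $\varphi\not\equiv 0$, let $F=\ell\circ\omega\in\mathcal{P}$, and suppose $T_{F,\varphi}(f)\in\mathcal{P}$ for every $f\in\mathcal{P}$. Denoting by $F(\zeta)$ and $\omega(\zeta)$ the radial limits on the unit circle $\mathbb{T}$, let $$A=\{\zeta\in\mathbb{T}:\mathrm{Re}\,F(\zeta)=0\}=\{\zeta\in\mathbb{T}:|\omega(\zeta)|=1,\ \omega(\zeta)\ne 1\}.$$ Then $m(A)=0$, where $m$ is normalized arc length measure on $\mathbb{T}$.
   Context: $\mathbb{D}$ is the open unit disk, $\mathbb{T}$ its boundary. $\mathcal{P}$ is the set of analytic $f$ on $\mathbb{D}$ with $\mathrm{Re}\,f>0$ and $f(0)=1$. A Schwarz-type function is an analytic $\varphi:\mathbb{D}\to\mathbb{D}$ with $\varphi(0)=0$. $\ell(z)=\frac{1+z}{1-z}$. $T_{F,\varphi}(f)=F\cdot(f\circ\varphi)$. *)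

theory Defs
  imports "HOL-Complex_Analysis.Complex_Analysis"
begin

definition ell :: "complex \<Rightarrow> complex" where
  "ell z = (1 + z) / (1 - z)"

definition schwarz_type :: "(complex \<Rightarrow> complex) \<Rightarrow> bool" where
  "schwarz_type \<phi> \<longleftrightarrow> \<phi> holomorphic_on ball 0 1 \<and> \<phi> ` ball 0 1 \<subseteq> ball 0 1 \<and> \<phi> 0 = 0"

definition class_P :: "(complex \<Rightarrow> complex) \<Rightarrow> bool" where
  "class_P f \<longleftrightarrow> f holomorphic_on ball 0 1 \<and> (\<forall>z\<in>ball 0 1. Re (f z) > 0) \<and> f 0 = 1"

definition T_op :: "(complex \<Rightarrow> complex) \<Rightarrow> (complex \<Rightarrow> complex) \<Rightarrow> (complex \<Rightarrow> complex) \<Rightarrow> complex \<Rightarrow> complex" where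
  "T_op F \<phi> f = (\<lambda>z. F z * f (\<phi> z))"

definition radial_limit :: "(complex \<Rightarrow> complex) \<Rightarrow> complex \<Rightarrow> complex \<Rightarrow> bool" where
  "radial_limit F \<zeta> L \<longleftrightarrow> ((\<lambda>r::real. F (of_real r * \<zeta>)) \<longlongrightarrow> L) (at_left 1)"

end

theory Submission
  imports Defs
begin


lemma mean_value_circle:
  fixes f :: "complex \<Rightarrow> complex" and r :: real
  assumes hol: "f holomorphic_on cball 0 r" and r: "r > 0"
  shows "((\<lambda>t. f (of_real r * cis t)) has_integral (2*pi * f 0)) {0..2*pi}"
proof -
  have "((\<lambda>u. f u/(u-0)) has_contour_integral (2 * of_real pi * \<i> * f 0)) (circlepath 0 r)"
    using Cauchy_integral_circlepath_simple[OF hol, of 0] r by simp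
  hence "((\<lambda>x. f (circlepath 0 r x) / (circlepath 0 r x - 0) * vector_derivative (circlepath 0 r) (at x within {0..1}))
     has_integral (2 * of_real pi * \<i> * f 0)) {0..1}"
    unfolding has_contour_integral_def .
  hence "((\<lambda>x. (2 * of_real pi * \<i>) * f (of_real r * cis (2*pi*x))) has_integral (2 * of_real pi * \<i> * f 0)) {0..1}"
  proof -
    assume H: "((\<lambda>x. f (circlepath 0 r x) / (circlepath 0 r x - 0) * vector_derivative (circlepath 0 r) (at x within {0..1}))
     has_integral (2 * of_real pi * \<i> * f 0)) {0..1}"
    have eq: "f (circlepath 0 r x) / (circlepath 0 r x - 0) * vector_derivative (circlepath 0 r) (at x within {0..1}) =
      (2 * of_real pi * \<i>) * f (of_real r * cis (2*pi*x))" if x: "x \<in> {0..1}" for x :: real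
    proof -
      have e: "exp (2 * of_real pi * \<i> * of_real x) = cis (2*pi*x)"
        by (simp add: cis_conv_exp mult_ac)
      have vd: "vector_derivative (circlepath 0 r) (at x within {0..1}) = 2 * pi * \<i> * r * cis (2*pi*x)"
        using x vector_derivative_circlepath01[of x 0 r] e by simp
      have c: "circlepath 0 r x = of_real r * cis (2*pi*x)"
        using e by (simp add: circlepath)
      have "cis (2*pi*x) \<noteq> 0" by simp
      then show ?thesis
        unfolding vd c using r by (simp add: field_simps)
    qed
    have "((\<lambda>x. f (circlepath 0 r x) / (circlepath 0 r x - 0) * vector_derivative (circlepath 0 r) (at x within {0..1}))
     has_integral (2 * of_real pi * \<i> * f 0)) {0..1} = ((\<lambda>x. (2 * of_real pi * \<i>) * f (of_real r * cis (2*pi*x))) has_integral (2 * of_real pi * \<i> * f 0)) {0..1}"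
      by (intro has_integral_cong eq)
    with H show ?thesis by blast
  qed
  hence "((\<lambda>x. f (of_real r * cis (2*pi*x))) has_integral f 0) {0..1}"
    by (subst (asm) has_integral_mult_right_iff) auto
  hence "((\<lambda>t. f (of_real r * cis (2*pi*((1/(2*pi)) *\<^sub>R t + 0)))) has_integral (1 / (\<bar>1/(2*pi)\<bar> ^ DIM(real))) *\<^sub>R f 0)
     ((\<lambda>x. (1 / (1/(2*pi))) *\<^sub>R x + -((1 / (1/(2*pi))) *\<^sub>R 0)) ` cbox 0 1)"
    by (intro has_integral_affinity) auto
  moreover have "((\<lambda>x. (1 / (1/(2*pi))) *\<^sub>R x + -((1 / (1/(2*pi))) *\<^sub>R 0)) ` cbox 0 1) = {0..2*pi::real}"
    by (auto simp: image_iff intro!: bexI[where x="x/(2*pi)" for x])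
  ultimately show ?thesis by (simp add: scaleR_conv_of_real)
qed

lemma ball_in_open_nbhd:
  assumes "open B" "cball (0::complex) r \<subseteq> B" "r \<ge> 0"
  obtains R where "R > r" "ball 0 R \<subseteq> B"
proof -
  obtain e where e: "e > 0" "(\<Union>x\<in>cball 0 r. ball x e) \<subseteq> B"
    using compact_subset_open_imp_ball_epsilon_subset[OF compact_cball assms(1,2)] by blast
  have "ball 0 (r+e) \<subseteq> B"
  proof
    fix y :: complex assume y: "y \<in> ball 0 (r+e)"
    show "y \<in> B"
    proof (cases "norm y \<le> r")
      case True then show ?thesis using e by (force)
    next
      case False
      define x where "x = of_real (r / norm y) * y"
      have ny: "norm y > 0" using False assms(3) by linarith
      have "norm x = \<bar>r / norm y\<bar> * norm y" unfolding x_def norm_mult norm_of_real ..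
      hence nx: "norm x = r" using ny assms(3) by simp
      have d: "y - x = of_real (1 - r/norm y) * y" by (simp add: x_def algebra_simps)
      have "norm (y - x) = \<bar>1 - r/norm y\<bar> * norm y" unfolding d norm_mult norm_of_real ..
      moreover have "1 - r/norm y \<ge> 0" using False ny by (simp add: field_simps)
      ultimately have "dist x y = (1 - r/norm y) * norm y" by (simp add: dist_norm norm_minus_commute)
      also have "\<dots> = norm y - r" using ny by (simp add: field_simps)
      finally have "dist x y < e" using y by simp
      thus ?thesis using e nx by force
    qed
  qed
  thus ?thesis using that e by (meson less_add_same_cancel1)
qed

lemma jensen_nozero:
  fixes f :: "complex \<Rightarrow> complex" and r :: real
  assumes hol: "f holomorphic_on S" and S: "open S" "cball 0 r \<subseteq> S" and r: "r > 0"
    and nz: "\<And>z. z \<in> cball 0 r \<Longrightarrow> f z \<noteq> 0"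
  shows "((\<lambda>t. ln (norm (f (of_real r * cis t)))) has_integral (2*pi*ln (norm (f 0)))) {0..2*pi}"
proof -
  have "{z\<in>S. f z \<noteq> 0} = S \<inter> f -` (-{0})" by auto
  moreover have "open (S \<inter> f -` (-{0}))"
    using hol S(1) by (intro continuous_open_preimage holomorphic_on_imp_continuous_on) auto
  ultimately have "open {z\<in>S. f z \<noteq> 0}" by simp
  moreover have "cball 0 r \<subseteq> {z\<in>S. f z \<noteq> 0}" using S nz by auto
  ultimately obtain R where R: "R > r" "ball 0 R \<subseteq> {z\<in>S. f z \<noteq> 0}"
    using ball_in_open_nbhd[of "{z\<in>S. f z \<noteq> 0}" r] r by auto
  have holR: "f holomorphic_on ball 0 R" using holomorphic_on_subset[OF hol] R by auto
  have nzR: "\<And>x. x \<in> ball 0 R \<Longrightarrow> f x \<noteq> 0" using R by auto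
  obtain L where L: "L holomorphic_on ball 0 R" "\<And>x. x \<in> ball 0 R \<Longrightarrow> exp (L x) = f x"
  proof (rule holomorphic_logarithm_exists[of "ball 0 R" f 0])
  qed (use holR nzR R r in auto)
  have "cball 0 r \<subseteq> ball (0::complex) R" using R by auto
  hence "L holomorphic_on cball 0 r" using holomorphic_on_subset[OF L(1)] by blast
  from has_integral_Re[OF mean_value_circle[OF this r]]
  have *: "((\<lambda>t. Re (L (of_real r * cis t))) has_integral Re (of_real (2*pi) * L 0)) {0..2*pi}" .
  have e1: "Re (L (of_real r * cis t)) = ln (norm (f (of_real r * cis t)))" for t
  proof -
    have "of_real r * cis t \<in> ball 0 R" using R r by (simp add: norm_mult)
    hence "f (of_real r * cis t) = exp (L (of_real r * cis t))" using L by auto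
    hence "norm (f (of_real r * cis t)) = exp (Re (L (of_real r * cis t)))" by (simp only: norm_exp_eq_Re)
    thus ?thesis by (simp only: ln_exp)
  qed
  have e2: "Re (of_real (2*pi) * L 0) = 2*pi*ln (norm (f 0))"
  proof -
    have "(0::complex) \<in> ball 0 R" using R r by simp
    hence "f 0 = exp (L 0)" using L by auto
    hence "norm (f 0) = exp (Re (L 0))" by (simp only: norm_exp_eq_Re)
    thus ?thesis by simp
  qed
  show ?thesis using * unfolding e1 e2 .
qed

lemma factor_global:
  fixes f :: "complex \<Rightarrow> complex"
  assumes hol: "f holomorphic_on S" and S: "open S" "connected S" and a: "a \<in> S"
    and nz: "\<exists>w\<in>S. f w \<noteq> 0"
  obtains q k where "q holomorphic_on S" "q a \<noteq> 0" "\<And>z. z \<in> S \<Longrightarrow> f z = (z - a)^k * q z"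
proof (cases "f a = 0")
  case False
  show ?thesis by (rule that[of f 0]) (use hol False in auto)
next
  case True
  have nc: "\<not> f constant_on S" using nz True a unfolding constant_on_def by metis
  obtain g r n where g: "0 < n" "0 < r" "ball a r \<subseteq> S" "g holomorphic_on ball a r"
      "\<And>w. w \<in> ball a r \<Longrightarrow> f w = (w - a)^n * g w" "\<And>w. w \<in> ball a r \<Longrightarrow> g w \<noteq> 0"
    using holomorphic_factor_zero_nonconstant[OF hol S a True nc] by metis
  define q where "q z = (if z = a then g a else f z / (z - a)^n)" for z
  have h1: "q holomorphic_on (S - {a})"
  proof (rule holomorphic_transform[where f="\<lambda>z. f z / (z - a)^n"])
    show "(\<lambda>z. f z / (z - a)^n) holomorphic_on (S - {a})"
      by (intro holomorphic_intros holomorphic_on_subset[OF hol]) auto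
  qed (auto simp: q_def)
  have h2: "q holomorphic_on ball a r"
  proof (rule holomorphic_transform[OF g(4)])
    fix x assume x: "x \<in> ball a r"
    show "g x = q x"
    proof (cases "x = a")
      case False
      then show ?thesis using g(5)[OF x] by (simp add: q_def)
    qed (simp add: q_def)
  qed
  have "q holomorphic_on ((S - {a}) \<union> ball a r)"
    by (rule holomorphic_on_Un[OF h1 h2]) (use S(1) in \<open>auto intro: open_Diff\<close>)
  moreover have "(S - {a}) \<union> ball a r = S" using g(2,3) a by auto
  ultimately have hq: "q holomorphic_on S" by simp
  show ?thesis
  proof (rule that[OF hq])
    show "q a \<noteq> 0" using g(6)[of a] g(2) by (simp add: q_def)
    fix z assume "z \<in> S"
    show "f z = (z - a)^n * q z"
      using True g(1) by (cases "z = a") (auto simp: q_def)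
  qed
qed

lemma blaschke_norm:
  fixes z a :: complex and r :: real
  assumes "norm z = r" "r > 0"
  shows "norm ((of_real (r^2) - cnj a * z) / of_real r) = norm (z - a)"
proof -
  have "of_real (r^2) = z * cnj z" using assms(1) complex_norm_square[of z] by simp
  hence "of_real (r^2) - cnj a * z = z * cnj (z - a)" by (simp add: algebra_simps)
  hence "norm (of_real (r^2) - cnj a * z) = r * norm (z - a)" using assms(1) by (simp only: norm_mult complex_mod_cnj)
  thus ?thesis using assms(2) by (simp add: norm_divide)
qed

lemma jensen_ineq_aux:
  fixes r :: real and S :: "complex set"
  assumes S: "open S" "connected S" "cball 0 r \<subseteq> S" and r: "r > 0"
  shows "\<And>f. f holomorphic_on S \<Longrightarrow> f 0 \<noteq> 0 \<Longrightarrow> (\<forall>z\<in>sphere 0 r. f z \<noteq> 0)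
     \<Longrightarrow> finite {z\<in>ball 0 r. f z = 0} \<Longrightarrow> card {z\<in>ball 0 r. f z = 0} = n
     \<Longrightarrow> \<exists>I. ((\<lambda>t. ln (norm (f (of_real r * cis t)))) has_integral I) {0..2*pi} \<and> I \<ge> 2*pi*ln (norm (f 0))"
proof (induction n)
  case 0
  fix f :: "complex \<Rightarrow> complex"
  assume hol: "f holomorphic_on S" and f0: "f 0 \<noteq> 0" and sph: "\<forall>z\<in>sphere 0 r. f z \<noteq> 0"
    and fin: "finite {z\<in>ball 0 r. f z = 0}" and c: "card {z\<in>ball 0 r. f z = 0} = 0"
  have "{z\<in>ball 0 r. f z = 0} = {}" using fin c by simp
  hence nz: "\<And>z. z \<in> cball 0 r \<Longrightarrow> f z \<noteq> 0" using sph by (auto simp: less_le)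
  show "\<exists>I. ((\<lambda>t. ln (norm (f (of_real r * cis t)))) has_integral I) {0..2*pi} \<and> I \<ge> 2*pi*ln (norm (f 0))"
    using jensen_nozero[OF hol S(1,3) r nz] by blast
next
  case (Suc n)
  fix f :: "complex \<Rightarrow> complex"
  assume hol: "f holomorphic_on S" and f0: "f 0 \<noteq> 0" and sph: "\<forall>z\<in>sphere 0 r. f z \<noteq> 0"
    and fin: "finite {z\<in>ball 0 r. f z = 0}" and c: "card {z\<in>ball 0 r. f z = 0} = Suc n"
  obtain a where aZ: "a \<in> {z\<in>ball 0 r. f z = 0}" using c by (metis card.empty ex_in_conv nat.distinct(1))
  have a0: "a \<noteq> 0" using aZ f0 by auto
  have ar: "norm a < r" using aZ by auto
  have aS: "a \<in> S" using aZ S(3) by auto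
  have "0 \<in> S" using S(3) r by auto
  then obtain q k where q: "q holomorphic_on S" "q a \<noteq> 0" "\<And>z. z \<in> S \<Longrightarrow> f z = (z - a)^k * q z"
    using factor_global[OF hol S(1,2) aS] f0 by blast
  define p where "p z = q z * ((of_real (r^2) - cnj a * z) / of_real r)^k" for z
  have hp: "p holomorphic_on S" unfolding p_def using r by (intro holomorphic_intros q(1)) auto
  have bl_nz: "(of_real (r^2) - cnj a * z) \<noteq> 0" if "norm z \<le> r" for z
  proof
    assume "of_real (r^2) - cnj a * z = 0"
    hence "cnj a * z = of_real (r^2)" by simp
    hence "norm (cnj a * z) = norm (of_real (r^2) :: complex)" by (simp only:)
    hence "norm (cnj a * z) = r^2" by (simp only: norm_of_real) simp
    moreover have "norm (cnj a * z) < r * r"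
    proof -
      have "norm a * norm z \<le> norm a * r" using that by (intro mult_left_mono) auto
      also have "\<dots> < r * r" using ar r by (intro mult_strict_right_mono) auto
      finally show ?thesis unfolding norm_mult complex_mod_cnj .
    qed
    ultimately show False by (simp add: power2_eq_square)
  qed
  have f0': "f 0 = (-a)^k * q 0" using q(3) \<open>0 \<in> S\<close> by simp
  have q0: "q 0 \<noteq> 0" using f0 f0' by auto
  have p0: "p 0 = q 0 * of_real r ^ k" using r by (simp add: p_def power2_eq_square)
  have p0nz: "p 0 \<noteq> 0" using p0 q0 r by simp
  have pZ: "{z\<in>ball 0 r. p z = 0} = {z\<in>ball 0 r. f z = 0} - {a}"
  proof (intro set_eqI iffI)
    fix z assume z: "z \<in> {z\<in>ball 0 r. p z = 0}"
    hence "norm z \<le> r" by auto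
    hence "q z = 0" using z bl_nz[of z] r by (auto simp: p_def)
    moreover have "z \<in> S" using z S(3) by auto
    ultimately show "z \<in> {z\<in>ball 0 r. f z = 0} - {a}" using z q(2,3) by auto
  next
    fix z assume z: "z \<in> {z\<in>ball 0 r. f z = 0} - {a}"
    moreover have "z \<in> S" using z S(3) by auto
    ultimately have "q z = 0" using q(3)[of z] by auto
    thus "z \<in> {z\<in>ball 0 r. p z = 0}" using z by (simp add: p_def)
  qed
  have psph: "\<forall>z\<in>sphere 0 r. p z \<noteq> 0"
  proof
    fix z :: complex assume z: "z \<in> sphere 0 r"
    hence "z \<in> S" using S(3) by auto
    hence "q z \<noteq> 0" using sph z q(3)[of z] by auto
    moreover have "norm z \<le> r" using z by simp
    ultimately show "p z \<noteq> 0" using bl_nz[of z] r by (simp add: p_def)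
  qed
  have finp: "finite {z\<in>ball 0 r. p z = 0}" using fin pZ by simp
  have cp: "card {z\<in>ball 0 r. p z = 0} = n" using pZ fin c aZ by simp
  obtain I where I: "((\<lambda>t. ln (norm (p (of_real r * cis t)))) has_integral I) {0..2*pi}" "I \<ge> 2*pi*ln (norm (p 0))"
    using Suc.IH[OF hp p0nz psph finp cp] by blast
  have eqn: "norm (p (of_real r * cis t)) = norm (f (of_real r * cis t))" for t
  proof -
    define z where "z = of_real r * cis t"
    have nz: "norm z = r" using r by (simp add: z_def norm_mult)
    hence "z \<in> S" using S(3) by auto
    hence "f z = (z - a)^k * q z" using q(3) by auto
    hence "norm (f z) = norm (z - a)^k * norm (q z)" by (simp add: norm_mult norm_power)
    moreover have "norm (p z) = norm (q z) * norm (z - a)^k"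
      unfolding p_def norm_mult norm_power blaschke_norm[OF nz r] ..
    ultimately show ?thesis unfolding z_def[symmetric] by simp
  qed
  have "ln (norm (f 0)) \<le> ln (norm (p 0))"
  proof -
    have "norm (f 0) = norm a ^ k * norm (q 0)" using f0' by (simp add: norm_mult norm_power)
    also have "\<dots> \<le> r ^ k * norm (q 0)"
      using ar by (intro mult_right_mono power_mono) auto
    also have "\<dots> = norm (p 0)" using p0 r by (simp add: norm_mult norm_power)
    finally show ?thesis using f0 by (intro ln_mono) auto
  qed
  hence "2*pi*ln (norm (f 0)) \<le> 2*pi*ln (norm (p 0))" by (intro mult_left_mono) auto
  hence "2*pi*ln (norm (f 0)) \<le> I" using I(2) by linarith
  then show "\<exists>I. ((\<lambda>t. ln (norm (f (of_real r * cis t)))) has_integral I) {0..2*pi} \<and> I \<ge> 2*pi*ln (norm (f 0))"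
    using I eqn by (intro exI[of _ I]) auto
qed

lemma finite_zeros_ball:
  fixes h :: "complex \<Rightarrow> complex"
  assumes hol: "h holomorphic_on ball 0 1" and h0: "h 0 \<noteq> 0" and b: "b < 1"
  shows "finite {z\<in>cball 0 b. h z = 0}"
proof (cases "h constant_on ball 0 1")
  case True
  then obtain c where c: "\<And>z. z \<in> ball 0 1 \<Longrightarrow> h z = c" unfolding constant_on_def by blast
  have "h 0 = c" using c by simp
  hence "{z\<in>cball 0 b. h z = 0} = {}" using c h0 b by auto
  thus ?thesis by (metis finite.emptyI)
next
  case False
  show ?thesis
    by (rule holomorphic_compact_finite_zeros[OF hol open_ball connected_ball compact_cball _ False])
       (use b in auto)
qed

lemma jensen_ball:
  fixes h :: "complex \<Rightarrow> complex"
  assumes hol: "h holomorphic_on ball 0 1" and h0: "h 0 \<noteq> 0" and r: "0 < r" "r < 1"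
    and sph: "\<forall>z\<in>sphere 0 r. h z \<noteq> 0"
  shows "\<exists>I. ((\<lambda>t. ln (norm (h (of_real r * cis t)))) has_integral I) {0..2*pi} \<and> I \<ge> 2*pi*ln (norm (h 0))"
proof -
  have "finite {z\<in>cball 0 r. h z = 0}" by (rule finite_zeros_ball[OF hol h0 r(2)])
  hence fin: "finite {z\<in>ball 0 r. h z = 0}" by (rule finite_subset[rotated]) auto
  show ?thesis
    by (rule jensen_ineq_aux[OF open_ball connected_ball _ r(1) hol h0 sph fin refl]) (use r in auto)
qed

lemma good_radius:
  fixes h :: "complex \<Rightarrow> complex"
  assumes hol: "h holomorphic_on ball 0 1" and h0: "h 0 \<noteq> 0" and a: "a < 1"
  obtains r where "a < r" "r < 1" "\<forall>z\<in>sphere 0 r. h z \<noteq> 0"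
proof -
  define b where "b = (max a 0 + 1) / 2"
  have b: "a < b" "b < 1" "0 \<le> b" using a by (auto simp: b_def)
  have fin: "finite (norm ` {z\<in>cball 0 b. h z = 0})"
    using finite_zeros_ball[OF hol h0 b(2)] by simp
  have "infinite {a<..<b}" using b by simp
  hence "infinite ({a<..<b} - norm ` {z\<in>cball 0 b. h z = 0})" by (rule Diff_infinite_finite[OF fin])
  hence "({a<..<b} - norm ` {z\<in>cball 0 b. h z = 0}) \<noteq> {}" by (metis finite.emptyI)
  then obtain r where r: "r \<in> {a<..<b}" "r \<notin> norm ` {z\<in>cball 0 b. h z = 0}"
    by blast
  show ?thesis
  proof (rule that)
    show "a < r" "r < 1" using r b by auto
    show "\<forall>z\<in>sphere 0 r. h z \<noteq> 0"
    proof (intro ballI notI)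
      fix z :: complex assume z: "z \<in> sphere 0 r" "h z = 0"
      hence "z \<in> {z\<in>cball 0 b. h z = 0}" using r by auto
      hence "norm z \<in> norm ` {z\<in>cball 0 b. h z = 0}" by blast
      thus False using z r by simp
    qed
  qed
qed




lemma radial_zero_null:
  fixes g :: "complex \<Rightarrow> complex" and M :: real
  assumes hol: "g holomorphic_on ball 0 1" and bd: "\<And>z. z \<in> ball 0 1 \<Longrightarrow> norm (g z) \<le> M"
    and nz: "\<exists>z\<in>ball 0 1. g z \<noteq> 0"
  shows "{t \<in> {0..2*pi}. ((\<lambda>r::real. g (of_real r * cis t)) \<longlongrightarrow> 0) (at_left 1)} \<in> null_sets lebesgue"
proof -
  obtain h k where h: "h holomorphic_on ball 0 1" "h 0 \<noteq> 0" "\<And>z. z \<in> ball 0 1 \<Longrightarrow> g z = (z - 0)^k * h z"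
    using factor_global[OF hol open_ball connected_ball, of 0] nz by auto
  have "\<forall>n::nat. \<exists>r. 1 - 1/(real n+2) < r \<and> r < 1 \<and> (\<forall>z\<in>sphere 0 r. h z \<noteq> 0)"
  proof
    fix n :: nat
    obtain r where "1 - 1/(real n+2) < r" "r < 1" "\<forall>z\<in>sphere 0 r. h z \<noteq> 0"
      by (rule good_radius[OF h(1,2), of "1 - 1/(real n+2)"]) auto
    thus "\<exists>r. 1 - 1/(real n+2) < r \<and> r < 1 \<and> (\<forall>z\<in>sphere 0 r. h z \<noteq> 0)" by blast
  qed
  then obtain \<rho> where \<rho>: "\<And>n. 1 - 1/(real n+2) < \<rho> n" "\<And>n. \<rho> n < 1" "\<And>n. \<forall>z\<in>sphere 0 (\<rho> n). h z \<noteq> 0"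
    by metis
  have \<rho>half: "\<rho> n \<ge> 1/2" for n
  proof -
    have "1/(real n+2) \<le> 1/2" by (simp add: field_simps)
    thus ?thesis using \<rho>(1)[of n] by linarith
  qed
  have \<rho>pos: "\<rho> n > 0" for n using \<rho>half[of n] by linarith
  have inball: "of_real (\<rho> n) * cis t \<in> ball 0 1" for n t
    using \<rho>pos[of n] \<rho>(2)[of n] by (simp add: norm_mult)
  have gnz: "g (of_real (\<rho> n) * cis t) \<noteq> 0" for n t
  proof -
    have "of_real (\<rho> n) * cis t \<in> sphere 0 (\<rho> n)" using \<rho>pos[of n] by (simp add: norm_mult)
    hence "h (of_real (\<rho> n) * cis t) \<noteq> 0" using \<rho>(3) by blast
    thus ?thesis using h(3)[OF inball[of n t]] \<rho>pos[of n] by simp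
  qed
  have M0: "M > 0"
  proof -
    obtain z where "z \<in> ball 0 1" "g z \<noteq> 0" using nz by blast
    thus ?thesis using bd[of z] by (meson norm_le_zero_iff not_le order_trans)
  qed
  define B where "B = ln M"
  define C where "C = 2*pi*(real k * ln (1/2) + ln (norm (h 0)))"
  define G where "G n t = B - ln (norm (g (of_real (\<rho> n) * cis t)))" for n t
  have Gnn: "G n t \<ge> 0" for n t
    using gnz[of n t] bd[OF inball[of n t]] M0 by (simp add: G_def B_def)
  have Gint: "\<exists>J. (G n has_integral J) {0..2*pi} \<and> J \<le> 2*pi*B - C" for n
  proof -
    obtain I where I: "((\<lambda>t. ln (norm (h (of_real (\<rho> n) * cis t)))) has_integral I) {0..2*pi}"
      "I \<ge> 2*pi*ln (norm (h 0))"
      using jensen_ball[OF h(1,2) \<rho>pos \<rho>(2) \<rho>(3)] by blast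
    have eq: "G n t = (B - real k * ln (\<rho> n)) - ln (norm (h (of_real (\<rho> n) * cis t)))" for t
    proof -
      have "of_real (\<rho> n) * cis t \<in> sphere 0 (\<rho> n)" using \<rho>pos[of n] by (simp add: norm_mult)
      hence hn: "h (of_real (\<rho> n) * cis t) \<noteq> 0" using \<rho>(3) by blast
      have "norm (g (of_real (\<rho> n) * cis t)) = \<rho> n ^ k * norm (h (of_real (\<rho> n) * cis t))"
        using h(3)[OF inball[of n t]] \<rho>pos[of n] by (simp add: norm_mult norm_power)
      hence "ln (norm (g (of_real (\<rho> n) * cis t))) = real k * ln (\<rho> n) + ln (norm (h (of_real (\<rho> n) * cis t)))"
        using hn \<rho>pos[of n] by (simp add: ln_mult ln_realpow)
      thus ?thesis by (simp add: G_def)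
    qed
    have "((\<lambda>t. (B - real k * ln (\<rho> n))) has_integral (2*pi*(B - real k * ln (\<rho> n)))) {0..2*pi}"
      using has_integral_const_real[of "B - real k * ln (\<rho> n)" 0 "2*pi"] by simp
    from has_integral_diff[OF this I(1)]
    have "((\<lambda>t. (B - real k * ln (\<rho> n)) - ln (norm (h (of_real (\<rho> n) * cis t)))) has_integral
        (2*pi*(B - real k * ln (\<rho> n)) - I)) {0..2*pi}" .
    hence GI: "(G n has_integral (2*pi*(B - real k * ln (\<rho> n)) - I)) {0..2*pi}"
      unfolding eq[abs_def] .
    have "ln (1/2) \<le> ln (\<rho> n)" using \<rho>half[of n] by simp
    hence "real k * ln (1/2) \<le> real k * ln (\<rho> n)" by (intro mult_left_mono) auto
    hence "2*pi*(real k * ln (1/2)) \<le> 2*pi*(real k * ln (\<rho> n))"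
      using mult_left_mono[of "real k * ln (1/2)" "real k * ln (\<rho> n)" "2*pi"] by simp
    hence "2*pi*(B - real k * ln (\<rho> n)) - I \<le> 2*pi*B - C"
    proof -
      have e1: "2*pi*(B - real k * ln (\<rho> n)) = 2*pi*B - 2*pi*(real k * ln (\<rho> n))" by (simp add: algebra_simps)
      have e2: "C = 2*pi*(real k * ln (1/2)) + 2*pi*ln (norm (h 0))" unfolding C_def by (simp add: algebra_simps)
      show ?thesis unfolding e1 e2 using I(2) \<open>2*pi*(real k * ln (1/2)) \<le> 2*pi*(real k * ln (\<rho> n))\<close> by linarith
    qed
    thus ?thesis using GI by blast
  qed
  define u where "u n t = ennreal (indicator {0..2*pi} t * G n t)" for n t
  have Gcont: "continuous_on UNIV (G n)" for n
  proof -
    have c1: "continuous_on UNIV (\<lambda>t. g (of_real (\<rho> n) * cis t))"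
      by (rule continuous_on_compose2[OF holomorphic_on_imp_continuous_on[OF hol]])
         (auto intro!: continuous_intros inball)
    show ?thesis unfolding G_def[abs_def]
      by (intro continuous_intros c1) (use gnz in auto)
  qed
  have Gmeas[measurable]: "G n \<in> borel_measurable lborel" for n
    using borel_measurable_continuous_onI[OF Gcont] by simp
  have umeas: "u n \<in> borel_measurable lborel" for n
    unfolding u_def by measurable
  have intle: "integral\<^sup>N lborel (u n) \<le> ennreal (2*pi*B - C)" for n
  proof -
    obtain J where J: "(G n has_integral J) {0..2*pi}" "J \<le> 2*pi*B - C" using Gint by blast
    have "integral\<^sup>N lborel (\<lambda>x. indicator {0..2*pi} x * G n x) = J"
      by (rule nn_integral_has_integral_lebesgue[OF _ J(1)]) (use Gnn in auto)
    hence "integral\<^sup>N lborel (u n) = ennreal J" unfolding u_def by simp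
    thus ?thesis using J(2) by (simp add: ennreal_leI)
  qed
  have "(\<integral>\<^sup>+ t. liminf (\<lambda>n. u n t) \<partial>lborel) \<le> liminf (\<lambda>n. integral\<^sup>N lborel (u n))"
    by (rule nn_integral_liminf) (use umeas in auto)
  also have "\<dots> \<le> limsup (\<lambda>n. integral\<^sup>N lborel (u n))" by (rule Liminf_le_Limsup) simp
  also have "\<dots> \<le> ennreal (2*pi*B - C)" by (rule Limsup_bounded) (use intle in auto)
  finally have fin: "(\<integral>\<^sup>+ t. liminf (\<lambda>n. u n t) \<partial>lborel) \<noteq> \<infinity>"
    using ennreal_less_top by (metis infinity_ennreal_def top.not_eq_extremum order_le_less_trans)
  have lm: "(\<lambda>t. liminf (\<lambda>n. u n t)) \<in> borel_measurable lborel"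
    by (rule borel_measurable_liminf) (use umeas in auto)
  have "AE t in lborel. liminf (\<lambda>n. u n t) \<noteq> \<infinity>" by (rule nn_integral_PInf_AE[OF lm fin])
  then obtain N where N: "{t \<in> space lborel. \<not> (liminf (\<lambda>n. u n t) \<noteq> \<infinity>)} \<subseteq> N"
      "emeasure lborel N = 0" "N \<in> sets lborel"
    by (rule AE_E)
  have Nnull: "N \<in> null_sets lebesgue" using N(2,3) by (intro null_sets_completionI) (simp add: null_sets_def)
  have \<rho>lim: "filterlim \<rho> (at_left 1) sequentially"
  proof (rule tendsto_imp_filterlim_at_left)
    have l1: "(\<lambda>n. 1 - inverse (real (Suc n))) \<longlonglongrightarrow> 1"
      using tendsto_diff[OF tendsto_const LIMSEQ_inverse_real_of_nat, of 1] by simp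
    show "\<rho> \<longlonglongrightarrow> 1"
    proof (rule tendsto_sandwich[OF _ _ l1 tendsto_const])
      show "\<forall>\<^sub>F n in sequentially. 1 - inverse (real (Suc n)) \<le> \<rho> n"
      proof (intro always_eventually allI)
        fix n
        have "inverse (real (Suc n)) \<ge> 1/(real n + 2)" by (simp add: field_simps)
        thus "1 - inverse (real (Suc n)) \<le> \<rho> n" using \<rho>(1)[of n] by linarith
      qed
      show "\<forall>\<^sub>F n in sequentially. \<rho> n \<le> 1" using \<rho>(2) less_imp_le by (intro always_eventually) blast
    qed
    show "\<forall>\<^sub>F n in sequentially. \<rho> n < 1" using \<rho>(2) by (intro always_eventually) blast
  qed
  have sub: "{t \<in> {0..2*pi}. ((\<lambda>r::real. g (of_real r * cis t)) \<longlongrightarrow> 0) (at_left 1)} \<subseteq> N"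
  proof
    fix t assume t: "t \<in> {t \<in> {0..2*pi}. ((\<lambda>r::real. g (of_real r * cis t)) \<longlongrightarrow> 0) (at_left 1)}"
    hence t02: "t \<in> {0..2*pi}" and lim: "((\<lambda>r::real. g (of_real r * cis t)) \<longlongrightarrow> 0) (at_left 1)" by auto
    have g0: "(\<lambda>n. g (of_real (\<rho> n) * cis t)) \<longlonglongrightarrow> 0"
      using filterlim_compose[OF lim \<rho>lim] by (simp add: o_def)
    hence "(\<lambda>n. norm (g (of_real (\<rho> n) * cis t))) \<longlonglongrightarrow> 0" by (rule tendsto_norm_zero)
    hence "filterlim (\<lambda>n. norm (g (of_real (\<rho> n) * cis t))) (at_right 0) sequentially"
      by (rule tendsto_imp_filterlim_at_right) (use gnz in \<open>auto intro: always_eventually\<close>)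
    hence "filterlim (\<lambda>n. ln (norm (g (of_real (\<rho> n) * cis t)))) at_bot sequentially"
      by (rule filterlim_compose[OF ln_at_0])
    hence "filterlim (\<lambda>n. - ln (norm (g (of_real (\<rho> n) * cis t)))) at_top sequentially"
      by (rule filterlim_compose[OF filterlim_uminus_at_top_at_bot])
    hence "filterlim (\<lambda>n. B + - ln (norm (g (of_real (\<rho> n) * cis t)))) at_top sequentially"
      by (rule filterlim_tendsto_add_at_top[OF tendsto_const])
    hence "filterlim (\<lambda>n. G n t) at_top sequentially" by (simp add: G_def)
    hence "((\<lambda>n. ennreal (G n t)) \<longlongrightarrow> top) sequentially" by (simp add: ennreal_tendsto_top_eq_at_top)
    moreover have "u n t = ennreal (G n t)" for n using t02 by (simp add: u_def)
    ultimately have "(\<lambda>n. u n t) \<longlonglongrightarrow> top" by simp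
    hence "liminf (\<lambda>n. u n t) = top" by (rule lim_imp_Liminf[rotated]) simp
    thus "t \<in> N" using N(1) by auto
  qed
  show ?thesis by (rule null_sets_completion_subset[OF sub Nnull])
qed




lemma Re_ell_pos:
  fixes x :: complex assumes "norm x < 1"
  shows "Re (ell x) > 0"
proof -
  have "(norm x)^2 < 1" using assms by (simp add: power_less_one_iff)
  hence "(Re x)^2 + (Im x)^2 < 1" by (simp only: cmod_power2)
  moreover have "Re x < 1" using assms complex_Re_le_cmod[of x] by linarith
  hence "(Re (1 - x))^2 + (Im (1 - x))^2 > 0" by (simp add: add_pos_nonneg)
  ultimately show ?thesis
    unfolding ell_def Re_divide by (intro divide_pos_pos) (auto simp: power2_eq_square algebra_simps)
qed

lemma class_P_rot:
  fixes c :: complex assumes c: "norm c = 1"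
  shows "class_P (\<lambda>w. ell (c * w))"
  unfolding class_P_def
proof (intro conjI ballI)
  show "(\<lambda>w. ell (c * w)) holomorphic_on ball 0 1"
    unfolding ell_def
  proof (intro holomorphic_intros)
    fix w :: complex assume "w \<in> ball 0 1"
    hence "norm (c * w) < 1" using c by (simp add: norm_mult)
    thus "1 - c * w \<noteq> 0" by auto
  qed
  fix z :: complex assume "z \<in> ball 0 1"
  hence "norm (c * z) < 1" using c by (simp add: norm_mult)
  thus "Re (ell (c * z)) > 0" by (rule Re_ell_pos)
qed (simp add: ell_def)

lemma ell_ii:
  fixes s :: real
  shows "Re (w * ell (\<i> * of_real s)) = ((1 - s^2) * Re w - 2 * s * Im w) / (1 + s^2)"
proof -
  have d: "1 - \<i> * of_real s \<noteq> 0" by (simp add: complex_eq_iff)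
  have d2: "1 + \<i> * of_real s \<noteq> 0" by (simp add: complex_eq_iff)
  have n: "(1 + \<i> * of_real s) * (1 + \<i> * of_real s) = (of_real (1 - s^2) + \<i> * of_real (2 * s))"
    by (simp add: complex_eq_iff power2_eq_square)
  have m: "(1 - \<i> * of_real s) * (1 + \<i> * of_real s) = of_real (1 + s^2)"
    by (simp add: complex_eq_iff power2_eq_square)
  have "ell (\<i> * of_real s) = ((1 + \<i> * of_real s) * (1 + \<i> * of_real s)) / ((1 - \<i> * of_real s) * (1 + \<i> * of_real s))"
    unfolding ell_def by (subst mult_divide_mult_cancel_right[OF d2]) (rule refl)
  also have "\<dots> = (of_real (1 - s^2) + \<i> * of_real (2 * s)) / of_real (1 + s^2)" unfolding n m ..
  finally have e: "ell (\<i> * of_real s) = (of_real (1 - s^2) + \<i> * of_real (2 * s)) / of_real (1 + s^2)" .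
  have p: "1 + s^2 > 0" by (simp add: add_pos_nonneg)
  show ?thesis unfolding e by (simp only: times_divide_eq_right Re_divide_of_real) (simp add: algebra_simps)
qed




lemma key_ineq:
  fixes \<phi> \<omega> :: "complex \<Rightarrow> complex"
  assumes P: "class_P (ell \<circ> \<omega>)" and T: "\<forall>f. class_P f \<longrightarrow> class_P (T_op (ell \<circ> \<omega>) \<phi> f)"
    and z: "z \<in> ball 0 1"
  shows "2 * norm (\<phi> z) * \<bar>Im ((ell \<circ> \<omega>) z)\<bar> \<le> Re ((ell \<circ> \<omega>) z)"
proof -
  define w where "w = (ell \<circ> \<omega>) z"
  define a where "a = \<phi> z"
  have Rew: "Re w > 0" using P z unfolding class_P_def w_def by blast
  show ?thesis
  proof (cases "a = 0")
    case True
    thus ?thesis using Rew by (simp add: a_def w_def)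
  next
    case False
    define \<sigma> :: real where "\<sigma> = (if Im w \<ge> 0 then 1 else -1)"
    define c where "c = \<i> * of_real \<sigma> * of_real (norm a) / a"
    have sig: "\<bar>\<sigma>\<bar> = 1" by (simp add: \<sigma>_def)
    have nc: "norm c = 1" using False sig by (simp add: c_def norm_mult norm_divide)
    have ca: "c * a = \<i> * of_real (\<sigma> * norm a)" using False by (simp add: c_def)
    have "class_P (T_op (ell \<circ> \<omega>) \<phi> (\<lambda>w. ell (c * w)))" using T class_P_rot[OF nc] by blast
    hence "Re (T_op (ell \<circ> \<omega>) \<phi> (\<lambda>w. ell (c * w)) z) > 0" using z unfolding class_P_def by blast
    hence "Re (w * ell (\<i> * of_real (\<sigma> * norm a))) > 0"
      unfolding T_op_def w_def using ca by (simp add: a_def)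
    hence "((1 - (\<sigma> * norm a)^2) * Re w - 2 * (\<sigma> * norm a) * Im w) / (1 + (\<sigma> * norm a)^2) > 0"
      by (simp only: ell_ii)
    moreover have "1 + (\<sigma> * norm a)^2 > 0" by (simp add: add_pos_nonneg)
    ultimately have P0: "(1 - (\<sigma> * norm a)^2) * Re w - 2 * (\<sigma> * norm a) * Im w > 0"
      by (simp add: zero_less_divide_iff)
    have A: "(\<sigma> * norm a)^2 = (norm a)^2" by (simp add: \<sigma>_def power_mult_distrib)
    have B: "\<sigma> * Im w = \<bar>Im w\<bar>" by (simp add: \<sigma>_def)
    have C: "2 * (\<sigma> * norm a) * Im w = 2 * norm a * \<bar>Im w\<bar>" using B by (metis mult.assoc mult.left_commute)
    have "(1 - (norm a)^2) * Re w - 2 * norm a * \<bar>Im w\<bar> > 0"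
      using P0 unfolding A C .
    moreover have "(norm a)^2 * Re w \<ge> 0" using Rew by simp
    ultimately have "2 * norm a * \<bar>Im w\<bar> \<le> Re w" by (simp add: algebra_simps)
    thus ?thesis by (simp add: a_def w_def)
  qed
qed

lemma omega_inv:
  fixes x :: complex assumes "norm x < 1"
  shows "x = (ell x - 1) / (ell x + 1)"
proof -
  have "x \<noteq> 1" using assms by auto
  hence d: "1 - x \<noteq> 0" by simp
  have "ell x + 1 = 2 / (1 - x)" unfolding ell_def using d by (simp add: field_simps)
  moreover have "ell x - 1 = 2 * x / (1 - x)" unfolding ell_def using d by (simp add: field_simps)
  ultimately show ?thesis using d by simp
qed

theorem proposition3p3:
  fixes \<phi> \<omega> :: "complex \<Rightarrow> complex"
  assumes "schwarz_type \<phi>" and "schwarz_type \<omega>"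
    and "\<exists>z\<in>ball 0 1. \<phi> z \<noteq> 0"
    and "class_P (ell \<circ> \<omega>)"
    and "\<forall>f. class_P f \<longrightarrow> class_P (T_op (ell \<circ> \<omega>) \<phi> f)"
  shows "{t \<in> {0..2*pi}. \<exists>L. radial_limit (ell \<circ> \<omega>) (cis t) L \<and> Re L = 0} \<in> null_sets lebesgue"
proof -
  have om: "\<omega> holomorphic_on ball 0 1" "\<And>z. z \<in> ball 0 1 \<Longrightarrow> norm (\<omega> z) < 1" "\<omega> 0 = 0"
    using assms(2) unfolding schwarz_type_def by (auto simp: image_subset_iff)
  have ph: "\<phi> holomorphic_on ball 0 1" "\<And>z. z \<in> ball 0 1 \<Longrightarrow> norm (\<phi> z) < 1"
    using assms(1) unfolding schwarz_type_def by (auto simp: image_subset_iff)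
  define E1 where "E1 = {t \<in> {0..2*pi}. ((\<lambda>r::real. \<omega> (of_real r * cis t) + 1) \<longlongrightarrow> 0) (at_left 1)}"
  define E2 where "E2 = {t \<in> {0..2*pi}. ((\<lambda>r::real. \<phi> (of_real r * cis t)) \<longlongrightarrow> 0) (at_left 1)}"
  have N1: "E1 \<in> null_sets lebesgue" unfolding E1_def
  proof (rule radial_zero_null[of _ 2])
    show "(\<lambda>z. \<omega> z + 1) holomorphic_on ball 0 1" by (intro holomorphic_intros om(1))
    fix z :: complex assume z: "z \<in> ball 0 1"
    have "norm (\<omega> z + 1) \<le> norm (\<omega> z) + norm (1::complex)" by (rule norm_triangle_ineq)
    thus "norm (\<omega> z + 1) \<le> 2" using om(2)[OF z] by simp
  next
    show "\<exists>z\<in>ball 0 1. \<omega> z + 1 \<noteq> 0" using om(3) by (intro bexI[of _ 0]) auto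
  qed
  have N2: "E2 \<in> null_sets lebesgue" unfolding E2_def
  proof (rule radial_zero_null[of _ 1])
    show "\<phi> holomorphic_on ball 0 1" by (rule ph(1))
    fix z :: complex assume z: "z \<in> ball 0 1"
    show "norm (\<phi> z) \<le> 1" using ph(2)[OF z] by simp
  qed (rule assms(3))
  have sub: "{t \<in> {0..2*pi}. \<exists>L. radial_limit (ell \<circ> \<omega>) (cis t) L \<and> Re L = 0} \<subseteq> E1 \<union> E2"
  proof
    fix t assume "t \<in> {t \<in> {0..2*pi}. \<exists>L. radial_limit (ell \<circ> \<omega>) (cis t) L \<and> Re L = 0}"
    then obtain L where t02: "t \<in> {0..2*pi}" and rl: "radial_limit (ell \<circ> \<omega>) (cis t) L" and ReL: "Re L = 0"
      by blast
    have lim: "((\<lambda>r::real. ell (\<omega> (of_real r * cis t))) \<longlongrightarrow> L) (at_left 1)"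
      using rl unfolding radial_limit_def by (simp add: o_def)
    have ev: "eventually (\<lambda>r::real. of_real r * cis t \<in> ball 0 1) (at_left 1)"
      using eventually_at_left_real[of 0 "1::real"] by (rule eventually_mono) (auto simp: norm_mult)
    show "t \<in> E1 \<union> E2"
    proof (cases "L = 0")
      case True
      have "((\<lambda>r::real. (ell (\<omega> (of_real r * cis t)) - 1) / (ell (\<omega> (of_real r * cis t)) + 1) + 1)
          \<longlongrightarrow> (L - 1) / (L + 1) + 1) (at_left 1)"
        using True by (intro tendsto_intros lim) auto
      hence l2: "((\<lambda>r::real. (ell (\<omega> (of_real r * cis t)) - 1) / (ell (\<omega> (of_real r * cis t)) + 1) + 1)
          \<longlongrightarrow> 0) (at_left 1)" using True by simp
      have "eventually (\<lambda>r::real. (ell (\<omega> (of_real r * cis t)) - 1) / (ell (\<omega> (of_real r * cis t)) + 1) + 1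
          = \<omega> (of_real r * cis t) + 1) (at_left 1)"
        using ev by (rule eventually_mono) (use om(2) omega_inv in metis)
      from Lim_transform_eventually[OF l2 this] have "t \<in> E1" using t02 by (simp add: E1_def)
      thus ?thesis by blast
    next
      case False
      have ImL: "Im L \<noteq> 0" using False ReL by (simp add: complex_eq_iff)
      have ImF: "((\<lambda>r::real. Im (ell (\<omega> (of_real r * cis t)))) \<longlongrightarrow> Im L) (at_left 1)"
        by (rule tendsto_Im[OF lim])
      have evIm: "eventually (\<lambda>r::real. Im (ell (\<omega> (of_real r * cis t))) \<noteq> 0) (at_left 1)"
        by (rule tendsto_imp_eventually_ne[OF ImF ImL])
      have bnd: "eventually (\<lambda>r::real. norm (\<phi> (of_real r * cis t)) \<le>
          Re (ell (\<omega> (of_real r * cis t))) / (2 * \<bar>Im (ell (\<omega> (of_real r * cis t)))\<bar>)) (at_left 1)"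
        using ev evIm
      proof eventually_elim
        case (elim r)
        have "2 * norm (\<phi> (of_real r * cis t)) * \<bar>Im ((ell \<circ> \<omega>) (of_real r * cis t))\<bar>
            \<le> Re ((ell \<circ> \<omega>) (of_real r * cis t))"
          by (rule key_ineq[OF assms(4,5) elim(1)])
        thus ?case using elim(2) by (simp add: pos_le_divide_eq mult_ac)
      qed
      have "((\<lambda>r::real. Re (ell (\<omega> (of_real r * cis t))) / (2 * \<bar>Im (ell (\<omega> (of_real r * cis t)))\<bar>))
          \<longlongrightarrow> Re L / (2 * \<bar>Im L\<bar>)) (at_left 1)"
        using ImL by (intro tendsto_intros lim) auto
      hence "((\<lambda>r::real. Re (ell (\<omega> (of_real r * cis t))) / (2 * \<bar>Im (ell (\<omega> (of_real r * cis t)))\<bar>))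
          \<longlongrightarrow> 0) (at_left 1)" using ReL by simp
      from Lim_null_comparison[OF bnd this] have "t \<in> E2" using t02 by (simp add: E2_def)
      thus ?thesis by blast
    qed
  qed
  have "E1 \<union> E2 \<in> null_sets lebesgue" using N1 N2 by (rule null_sets.Un)
  thus ?thesis by (rule null_sets_completion_subset[OF sub])
qed


end
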